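(* Let $b \geq 2$ be an integer. There exists a constant $C_b > 0$, depending only on $b$, such that for every integer $n > e$ (i.e., $n \geq 3$), \[ s_b(n!) > C_b \log n \,\log\log\log n \quad\text{and}\quad s_b(\Lambda_n) > C_b \log n \,\log\log\log n . \]
   Context: For an integer $b \geq 2$ and a positive integer $m$, $s_b(m)$ denotes the sum of the digits of $m$ when written in base $b$. For a positive integer $n$, $\Lambda_n := \operatorname{lcm}(1,2,\ldots,n)$ is the least common multiple of $1,2,\ldots,n$. $\log$ is the natural logarithm. *)

theory Defs
  imports Complex_Main
begin

fun digit_sum :: "nat \<Rightarrow> nat \<Rightarrow> nat" where
  "digit_sum b m = (if b < 2 \<or> m = 0 then 0 else m mod b + digit_sum b (m div b))"

declare digit_sum.simps[simp del]

definition lcm_upto :: "nat \<Rightarrow> nat" where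
  "lcm_upto n = Lcm {1..n}"

end

theory Submission
  imports Defs "HOL-Number_Theory.Number_Theory" "HOL-Real_Asymp.Real_Asymp"
begin

lemma ds_rec: assumes "b \<ge> 2" shows "digit_sum b m = m mod b + digit_sum b (m div b)"
  using assms by (cases "m = 0") (simp_all add: digit_sum.simps[of b m] digit_sum.simps[of b 0])

lemma ds_split:
  assumes "b \<ge> 2" "r < b ^ T"
  shows "digit_sum b (q * b ^ T + r) = digit_sum b q + digit_sum b r"
  using assms(2)
proof (induction T arbitrary: q r)
  case 0
  then show ?case by (simp add: digit_sum.simps[of b 0])
next
  case (Suc T)
  have b0: "b > 0" using assms by simp
  have e: "q * b ^ Suc T + r = (q * b ^ T + r div b) * b + r mod b"
    by (simp add: algebra_simps)
  have lt: "r div b < b ^ T" using Suc.prems b0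
    by (simp add: div_less_iff_less_mult mult.commute)
  have "digit_sum b (q * b ^ Suc T + r) = r mod b + digit_sum b (q * b ^ T + r div b)"
    using ds_rec[OF assms(1), of "q * b ^ Suc T + r"] unfolding e using b0 by simp
  also have "\<dots> = r mod b + digit_sum b q + digit_sum b (r div b)"
    using Suc.IH[OF lt] by simp
  also have "\<dots> = digit_sum b q + digit_sum b r" using ds_rec[OF assms(1), of r] by simp
  finally show ?case .
qed

lemma ds_add:
  assumes "b \<ge> 2"
  shows "digit_sum b (x + y) \<le> digit_sum b x + digit_sum b y"
proof (induction "x + y" arbitrary: x y rule: less_induct)
  case less
  show ?case
  proof (cases "x + y = 0")
    case True then show ?thesis by simp
  next
    case False
    have b0: "b > 0" using assms by simp
    define c where "c = (x mod b + y mod b) div b"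
    have s2: "x mod b + y mod b < 2 * b"
      using mod_less_divisor[OF b0, of x] mod_less_divisor[OF b0, of y] by linarith
    have "c < 2" unfolding c_def using s2 b0 by (simp add: div_less_iff_less_mult mult.commute)
    then have c1: "c \<le> 1" by simp
    have "(x + y) mod b = (x mod b + y mod b) mod b" by (rule mod_add_eq[symmetric])
    also have "\<dots> = x mod b + y mod b - (x mod b + y mod b) div b * b"
      by (rule minus_div_mult_eq_mod[symmetric])
    finally have m: "(x + y) mod b = x mod b + y mod b - c * b" unfolding c_def .
    have cb: "c * b \<le> x mod b + y mod b" unfolding c_def by simp
    have d: "(x + y) div b = x div b + y div b + c"
      unfolding c_def by (rule div_add1_eq)
    have lt: "x div b + (y div b + c) < x + y"
    proof -
      have "x div b + y div b + c \<le> (x + y) div b" using d by simp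
      also have "\<dots> < x + y" using False assms by (simp add: div_less_dividend)
      finally show ?thesis by simp
    qed
    have lt2: "y div b + c < x + y" using lt by simp
    have "digit_sum b (x + y) = (x + y) mod b + digit_sum b (x div b + (y div b + c))"
      using ds_rec[OF assms, of "x+y"] d by (simp add: add.assoc)
    also have "\<dots> \<le> (x + y) mod b + digit_sum b (x div b) + digit_sum b (y div b + c)"
      using less(1)[OF lt] by simp
    also have "\<dots> \<le> (x + y) mod b + digit_sum b (x div b) + digit_sum b (y div b) + digit_sum b c"
      using less(1)[OF lt2] by simp
    finally have ch: "digit_sum b (x + y) \<le> (x + y) mod b + digit_sum b (x div b) + digit_sum b (y div b) + digit_sum b c" .
    have dsc: "digit_sum b c \<le> c"
    proof (cases "c = 0")
      case True then show ?thesis by (simp add: digit_sum.simps[of b 0])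
    next
      case False then have "c = 1" using c1 by simp
      then show ?thesis using assms ds_rec[OF assms, of 1] by (simp add: digit_sum.simps[of b 0])
    qed
    have mm: "(x + y) mod b + c * b = x mod b + y mod b" using m cb by simp
    have cc: "c \<le> c * b" using assms by simp
    have "digit_sum b x + digit_sum b y = x mod b + y mod b + digit_sum b (x div b) + digit_sum b (y div b)"
      using ds_rec[OF assms, of x] ds_rec[OF assms, of y] by simp
    then show ?thesis using ch dsc mm cc by linarith
  qed
qed

lemma ds_pow_minus_1:
  assumes "b \<ge> 2" shows "digit_sum b (b ^ T - 1) = (b - 1) * T"
proof (induction T)
  case 0 then show ?case by (simp add: digit_sum.simps[of b 0])
next
  case (Suc T)
  have b0: "b > 0" using assms by simp
  have p: "b ^ T \<ge> 1" using b0 by simp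
  have e: "b ^ Suc T - 1 = (b ^ T - 1) * b + (b - 1)"
    using p b0 by (simp add: algebra_simps diff_mult_distrib)
  have bl: "b - 1 < b" using b0 by simp
  have m1: "((b ^ T - 1) * b + (b - 1)) mod b = b - 1"
    unfolding mod_mult_self3 using bl by (rule mod_less)
  have d1: "((b ^ T - 1) * b + (b - 1)) div b = b ^ T - 1"
    using b0 bl by (simp only: div_mult_self3 div_less)
  have "digit_sum b (b ^ Suc T - 1) = (b - 1) + digit_sum b (b ^ T - 1)"
    using ds_rec[OF assms, of "b ^ Suc T - 1"] unfolding e m1 d1 .
  then show ?case using Suc by simp
qed

lemma ds_multiple:
  assumes "b \<ge> 2" "T \<ge> 1" "m > 0" "(b ^ T - 1) dvd m"
  shows "digit_sum b m \<ge> (b - 1) * T"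
  using assms(3,4)
proof (induction m rule: less_induct)
  case (less m)
  have bT: "b ^ T \<ge> 2"
  proof -
    have "b ^ 1 \<le> b ^ T" using assms(1,2) by (intro power_increasing) auto
    then show ?thesis using assms(1) by simp
  qed
  show ?case
  proof (cases "m < b ^ T")
    case True
    obtain k where k: "m = (b ^ T - 1) * k" using less.prems by auto
    have "k \<ge> 1" using k less.prems by (cases k) auto
    moreover have "k < 2"
    proof (rule ccontr)
      assume "\<not> k < 2"
      then have "(b ^ T - 1) * 2 \<le> m" unfolding k by (intro mult_le_mono) auto
      then show False using True bT by simp
    qed
    ultimately have "m = b ^ T - 1" using k by simp
    then show ?thesis using ds_pow_minus_1[OF assms(1)] by simp
  next
    case False
    define q where "q = m div b ^ T"
    define r where "r = m mod b ^ T"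
    have mq: "m = q * b ^ T + r" unfolding q_def r_def by (rule div_mult_mod_eq[symmetric])
    have rl: "r < b ^ T" unfolding r_def by (rule mod_less_divisor) (use bT in linarith)
    have q1: "q \<ge> 1" unfolding q_def using False bT assms(1)
      by (simp add: div_greater_zero_iff Suc_le_eq)
    have "q * 1 < q * b ^ T" using q1 bT by (intro mult_strict_left_mono) auto
    then have lt: "q + r < m" unfolding mq by simp
    have dv: "(b ^ T - 1) dvd (q + r)"
    proof -
      have "q * (b ^ T - 1) + q = q * (b ^ T - 1 + 1)" by (simp add: algebra_simps)
      also have "b ^ T - 1 + 1 = b ^ T" using bT by simp
      finally have e1: "q * (b ^ T - 1) + q = q * b ^ T" .
      have "m = q * (b ^ T - 1) + (q + r)" unfolding mq using e1 by simp
      then show ?thesis using less.prems(2)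
        by (metis dvd_add_right_iff dvd_triv_right)
    qed
    have "(b - 1) * T \<le> digit_sum b (q + r)"
      using less.IH[OF lt _ dv] q1 by simp
    also have "\<dots> \<le> digit_sum b q + digit_sum b r" by (rule ds_add[OF assms(1)])
    also have "\<dots> = digit_sum b m" unfolding mq using ds_split[OF assms(1) rl] by simp
    finally show ?thesis .
  qed
qed


lemma lcm_upto_dvd_fact: "lcm_upto n dvd fact n"
  unfolding lcm_upto_def by (rule Lcm_least) (auto intro: dvd_fact)

lemma lcm_upto_pos: "lcm_upto n > 0"
proof -
  have "Lcm {1..n} \<noteq> (0::nat)" by (subst Lcm_0_iff) auto
  then show ?thesis unfolding lcm_upto_def by (intro gr0I) blast
qed

lemma dvd_lcm_upto:
  assumes "d > 0" "\<And>p. prime p \<Longrightarrow> p ^ multiplicity p d \<le> n"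
  shows "d dvd lcm_upto n"
proof (rule multiplicity_le_imp_dvd)
  show "d \<noteq> 0" using assms by simp
  fix p :: nat assume p: "prime p"
  have "p ^ multiplicity p d \<in> {1..n}" using assms(2)[OF p] p
    by (simp add: prime_gt_0_nat Suc_le_eq)
  then have "p ^ multiplicity p d dvd lcm_upto n" unfolding lcm_upto_def by (rule dvd_Lcm)
  then show "multiplicity p d \<le> multiplicity p (lcm_upto n)"
    using lcm_upto_pos p
    by (metis multiplicity_geI not_prime_unit order_less_irrefl)
qed


lemma pow_dvd_ord_iff:
  fixes b :: nat assumes "b \<ge> 1"
  shows "m dvd b ^ e - 1 \<longleftrightarrow> ord m b dvd e"
proof -
  have "b ^ e \<ge> 1" using assms by simp
  then have "m dvd b ^ e - 1 \<longleftrightarrow> [b ^ e = 1] (mod m)" by (simp add: cong_altdef_nat)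
  also have "\<dots> \<longleftrightarrow> ord m b dvd e" by (rule ord_divides)
  finally show ?thesis .
qed

lemma bpow_ne0: fixes b :: nat assumes "b \<ge> 2" "e > 0" shows "b ^ e - 1 \<noteq> 0"
proof -
  have "b ^ e \<ge> b ^ 1" using assms by (intro power_increasing) auto
  then show ?thesis using assms by simp
qed

lemma mult_gcd_min:
  fixes b q x y :: nat
  assumes b: "b \<ge> 2" and q: "prime q" and xy: "x > 0" "y > 0"
  shows "multiplicity q (b ^ gcd x y - 1) = min (multiplicity q (b ^ x - 1)) (multiplicity q (b ^ y - 1))"
proof -
  have g: "gcd x y > 0" using xy by simp
  have nu: "\<not> is_unit q" using q not_prime_unit by blast
  have iff: "k \<le> multiplicity q (b ^ e - 1) \<longleftrightarrow> ord (q ^ k) b dvd e" if e: "e > 0" for e k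
  proof -
    have "k \<le> multiplicity q (b ^ e - 1) \<longleftrightarrow> q ^ k dvd b ^ e - 1"
      using power_dvd_iff_le_multiplicity[OF bpow_ne0[OF b e] nu] by simp
    also have "\<dots> \<longleftrightarrow> ord (q ^ k) b dvd e" using b by (intro pow_dvd_ord_iff) simp
    finally show ?thesis .
  qed
  define m where "m = multiplicity q (b ^ gcd x y - 1)"
  define k where "k = min (multiplicity q (b ^ x - 1)) (multiplicity q (b ^ y - 1))"
  have "ord (q ^ m) b dvd gcd x y" using iff[OF g, of m] unfolding m_def by simp
  then have "ord (q ^ m) b dvd x" "ord (q ^ m) b dvd y" by (auto intro: dvd_trans)
  then have 1: "m \<le> k" unfolding k_def using iff xy by auto
  have "k \<le> multiplicity q (b ^ x - 1)" "k \<le> multiplicity q (b ^ y - 1)" unfolding k_def by auto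
  then have "ord (q ^ k) b dvd x" "ord (q ^ k) b dvd y" using iff xy by auto
  then have "ord (q ^ k) b dvd gcd x y" by simp
  then have "k \<le> m" unfolding m_def using iff[OF g] by simp
  with 1 show ?thesis unfolding m_def k_def by (simp only: le_antisym)
qed

lemma gcd_div_two_primes:
  fixes e x r :: nat
  assumes "prime x" "prime r" "x \<noteq> r" "x dvd e" "r dvd e"
  shows "gcd (e div x) (e div r) = e div x div r"
proof -
  have "x * r dvd e" using assms by (simp add: divides_mult primes_coprime)
  then obtain k where k: "e = x * r * k" by auto
  have xp: "x > 0" "r > 0" using assms prime_gt_0_nat by auto
  have "e div x = r * k" "e div r = x * k" "e div x div r = k" using k xp by simp_all
  moreover have "gcd (r * k) (x * k) = k"
    using primes_coprime[of r x] assms by (simp add: gcd_mult_right coprime_commute)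
  ultimately show ?thesis by simp
qed

definition Alt :: "(nat \<Rightarrow> 'a::comm_ring_1) \<Rightarrow> nat \<Rightarrow> nat set \<Rightarrow> 'a" where
  "Alt g e R = (\<Sum>S\<in>Pow R. (-1) ^ card S * g (e div \<Prod>S))"

lemma Alt_empty [simp]: "Alt g e {} = g e"
  by (simp add: Alt_def)

lemma Alt_insert:
  assumes "finite R" "x \<notin> R"
  shows "Alt g e (insert x R) = Alt g e R - Alt g (e div x) R"
proof -
  have disj: "Pow R \<inter> insert x ` Pow R = {}" using assms by auto
  have inj: "inj_on (insert x) (Pow R)" using assms unfolding inj_on_def by (auto)
  have fin: "finite (Pow R)" "finite (insert x ` Pow R)" using assms by auto
  have "Alt g e (insert x R) = (\<Sum>S\<in>Pow R. (-1) ^ card S * g (e div \<Prod>S))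
        + (\<Sum>S\<in>insert x ` Pow R. (-1) ^ card S * g (e div \<Prod>S))"
    unfolding Alt_def Pow_insert by (rule sum.union_disjoint[OF fin disj])
  also have "(\<Sum>S\<in>insert x ` Pow R. (-1) ^ card S * g (e div \<Prod>S))
      = (\<Sum>S\<in>Pow R. (-1) ^ card (insert x S) * g (e div \<Prod>(insert x S)))"
    by (rule sum.reindex[OF inj, unfolded comp_def])
  also have "\<dots> = (\<Sum>S\<in>Pow R. - ((-1) ^ card S * g (e div x div \<Prod>S)))"
  proof (rule sum.cong[OF refl])
    fix S assume S: "S \<in> Pow R"
    then have "finite S" "x \<notin> S" using assms finite_subset by auto
    then show "(-1) ^ card (insert x S) * g (e div \<Prod>(insert x S)) = - ((-1) ^ card S * g (e div x div \<Prod>S))"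
      by (simp add: div_mult2_eq)
  qed
  also have "\<dots> = - Alt g (e div x) R" unfolding Alt_def by (simp add: sum_negf)
  finally show ?thesis unfolding Alt_def by simp
qed

lemma Max_ins0:
  fixes X :: "int set"
  assumes "finite X" shows "Max (insert 0 (insert a X)) = max a (Max (insert 0 X))"
proof -
  have e: "insert 0 (insert a X) = insert a (insert 0 X)" by auto
  have "Max (insert a (insert 0 X)) = max a (Max (insert 0 X))" using assms by (intro Max_insert) auto
  then show ?thesis unfolding e .
qed

lemma Max_min_image:
  fixes f :: "nat \<Rightarrow> int"
  assumes "finite R" "A \<ge> 0"
  shows "Max (insert 0 ((\<lambda>r. min A (f r)) ` R)) = min A (Max (insert 0 (f ` R)))"
  using assms(1)
proof (induction R rule: finite_induct)
  case empty then show ?case using assms by simp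
next
  case (insert z R)
  have "Max (insert 0 ((\<lambda>r. min A (f r)) ` insert z R))
      = max (min A (f z)) (Max (insert 0 ((\<lambda>r. min A (f r)) ` R)))"
    using insert by (simp add: Max_ins0 del: Max_insert)
  also have "\<dots> = max (min A (f z)) (min A (Max (insert 0 (f ` R))))" using insert by simp
  also have "\<dots> = min A (max (f z) (Max (insert 0 (f ` R))))" by (simp add: max_min_distrib2 min_max_distrib1) 
  also have "max (f z) (Max (insert 0 (f ` R))) = Max (insert 0 (f ` insert z R))"
    using insert by (simp add: Max_ins0 del: Max_insert)
  finally show ?case .
qed

lemma Alt_minmax:
  fixes h :: "nat \<Rightarrow> int"
  assumes hmin: "\<And>x y. x > 0 \<Longrightarrow> y > 0 \<Longrightarrow> h (gcd x y) = min (h x) (h y)"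
    and hnn: "\<And>x. h x \<ge> 0"
    and "finite R"
  shows "(\<forall>r\<in>R. prime r \<and> r dvd e) \<Longrightarrow> e > 0 \<Longrightarrow>
     Alt h e R = h e - Max (insert 0 ((\<lambda>r. h (e div r)) ` R))"
  using assms(3)
proof (induction R arbitrary: e rule: finite_induct)
  case empty then show ?case by simp
next
  case (insert x R)
  have xp: "prime x" "x dvd e" using insert.prems by auto
  have "e div x \<noteq> 0" using xp insert.prems(2) by (simp add: dvd_div_eq_0_iff)
  then have ex: "e div x > 0" by simp
  have Rdiv: "\<forall>r\<in>R. prime r \<and> r dvd e div x"
  proof
    fix r assume r: "r \<in> R"
    then have rp: "prime r" "r dvd e" "r \<noteq> x" using insert by auto
    have "coprime r x" using rp xp primes_coprime by blast
    moreover have "r dvd x * (e div x)" using rp xp by simp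
    ultimately show "prime r \<and> r dvd e div x" using rp by (meson coprime_dvd_mult_right_iff)
  qed
  have IH1: "Alt h e R = h e - Max (insert 0 ((\<lambda>r. h (e div r)) ` R))"
    using insert.IH insert.prems by auto
  have IH2: "Alt h (e div x) R = h (e div x) - Max (insert 0 ((\<lambda>r. h (e div x div r)) ` R))"
    using insert.IH[OF Rdiv ex] .
  have eq: "(\<lambda>r. h (e div x div r)) ` R = (\<lambda>r. min (h (e div x)) (h (e div r))) ` R"
  proof (rule image_cong[OF refl])
    fix r assume r: "r \<in> R"
    then have rp: "prime r" "r dvd e" "r \<noteq> x" using insert by auto
    have "e div r \<noteq> 0" using rp insert.prems(2) by (simp add: dvd_div_eq_0_iff)
    then have er: "e div r > 0" by simp
    have "e div x div r = gcd (e div x) (e div r)"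
      using gcd_div_two_primes[OF xp(1) rp(1) rp(3)[symmetric] xp(2) rp(2)] by simp
    then show "h (e div x div r) = min (h (e div x)) (h (e div r))" using hmin[OF ex er] by simp
  qed
  define M where "M = Max (insert 0 ((\<lambda>r. h (e div r)) ` R))"
  have M2: "Max (insert 0 ((\<lambda>r. h (e div x div r)) ` R)) = min (h (e div x)) M"
    unfolding eq M_def by (rule Max_min_image[OF insert.hyps(1) hnn])
  have Mi: "Max (insert 0 ((\<lambda>r. h (e div r)) ` insert x R)) = max (h (e div x)) M"
    unfolding M_def using insert.hyps by (simp add: Max_ins0 del: Max_insert)
  show ?case
    unfolding Alt_insert[OF insert.hyps] IH1 IH2 M2 Mi using M_def by (simp add: min_def max_def)
qed

lemma Alt_id:
  assumes "finite R"
  shows "(\<forall>r\<in>R. prime r \<and> r dvd e) \<Longrightarrow>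
     Alt (\<lambda>x. real x) e R = real e * (\<Prod>r\<in>R. 1 - 1 / real r)"
  using assms
proof (induction R arbitrary: e rule: finite_induct)
  case empty then show ?case by simp
next
  case (insert x R)
  have xp: "prime x" "x dvd e" using insert.prems by auto
  have Rdiv: "\<forall>r\<in>R. prime r \<and> r dvd e div x"
  proof
    fix r assume r: "r \<in> R"
    then have rp: "prime r" "r dvd e" "r \<noteq> x" using insert by auto
    have "coprime r x" using rp xp primes_coprime by blast
    moreover have "r dvd x * (e div x)" using rp xp by simp
    ultimately show "prime r \<and> r dvd e div x" using rp by (meson coprime_dvd_mult_right_iff)
  qed
  have ed: "real (e div x) = real e / real x" using xp by (simp add: real_of_nat_div)
  have x0: "real x > 0" using xp prime_gt_0_nat by simp
  show ?case
    unfolding Alt_insert[OF insert.hyps] using insert.IH[OF Rdiv] insert.IH[of e] insert.prems insert.hyps ed x0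
    by (simp add: field_simps)
qed


lemma Alt_split:
  fixes g :: "nat \<Rightarrow> 'a::comm_ring_1"
  assumes "finite R"
  shows "Alt g e R = (\<Sum>S\<in>{S\<in>Pow R. even (card S)}. g (e div \<Prod>S))
                   - (\<Sum>S\<in>{S\<in>Pow R. odd (card S)}. g (e div \<Prod>S))"
proof -
  have fin: "finite {S\<in>Pow R. even (card S)}" "finite {S\<in>Pow R. odd (card S)}" using assms by auto
  have un: "Pow R = {S\<in>Pow R. even (card S)} \<union> {S\<in>Pow R. odd (card S)}" by auto
  have "Alt g e R = (\<Sum>S\<in>{S\<in>Pow R. even (card S)}. (-1) ^ card S * g (e div \<Prod>S))
                  + (\<Sum>S\<in>{S\<in>Pow R. odd (card S)}. (-1) ^ card S * g (e div \<Prod>S))"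
    unfolding Alt_def by (subst un, rule sum.union_disjoint[OF fin]) auto
  also have "(\<Sum>S\<in>{S\<in>Pow R. even (card S)}. (-1) ^ card S * g (e div \<Prod>S))
      = (\<Sum>S\<in>{S\<in>Pow R. even (card S)}. g (e div \<Prod>S))"
    by (rule sum.cong) auto
  also have "(\<Sum>S\<in>{S\<in>Pow R. odd (card S)}. (-1) ^ card S * g (e div \<Prod>S))
      = - (\<Sum>S\<in>{S\<in>Pow R. odd (card S)}. g (e div \<Prod>S))"
    by (subst sum_negf[symmetric], rule sum.cong) auto
  finally show ?thesis by simp
qed

lemma prod_primes_dvd:
  fixes u :: nat
  assumes "u > 0" "S \<subseteq> prime_factors u"
  shows "\<Prod>S dvd u"
proof -
  have "\<Prod>S dvd (\<Prod>p\<in>prime_factors u. p ^ multiplicity p u)"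
  proof (rule prod_dvd_prod_subset2)
    show "finite (prime_factors u)" by simp
    show "S \<subseteq> prime_factors u" by fact
    fix p assume "p \<in> S"
    then have "p \<in> prime_factors u" using assms by auto
    then have "multiplicity p u \<ge> 1" by (simp add: prime_factors_multiplicity Suc_le_eq)
    then show "p dvd p ^ multiplicity p u" by (simp add: dvd_power)
  qed
  also have "\<dots> = u" using assms by (simp add: prime_factorization_nat[symmetric])
  finally show ?thesis .
qed

lemma exp_le_one_minus:
  fixes t :: real assumes "0 \<le> t" "t \<le> 1/2" shows "exp (- 2 * t) \<le> 1 - t"
proof -
  have "t * (2 * t) \<le> t * 1" using assms by (intro mult_left_mono) auto
  then have "- 2 * t \<le> - t - 2 * t\<^sup>2" by (simp add: power2_eq_square algebra_simps)
  also have "\<dots> \<le> ln (1 - t)" by (rule ln_one_minus_pos_lower_bound[OF assms])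
  finally have "exp (- 2 * t) \<le> exp (ln (1 - t))" by simp
  also have "\<dots> = 1 - t" using assms by simp
  finally show ?thesis .
qed

lemma geom_le:
  fixes x :: real assumes "0 \<le> x" "x \<le> 1/2"
  shows "(\<Sum>d\<in>{1..n}. x ^ d) \<le> 1 - x ^ n"
proof (induction n)
  case 0 then show ?case by simp
next
  case (Suc n)
  have "(\<Sum>d\<in>{1..Suc n}. x ^ d) = (\<Sum>d\<in>{1..n}. x ^ d) + x ^ Suc n" by simp
  also have "\<dots> \<le> 1 - x ^ n + x ^ Suc n" using Suc by simp
  also have "\<dots> \<le> 1 - x ^ Suc n"
  proof -
    have "x ^ Suc n = x * x ^ n" by simp
    moreover have "x ^ n \<ge> 0" using assms by simp
    moreover have "(2 * x) * x ^ n \<le> 1 * x ^ n" using assms \<open>x ^ n \<ge> 0\<close> by (intro mult_right_mono) auto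
    ultimately have "2 * x ^ Suc n \<le> x ^ n" by simp
    then show ?thesis by simp
  qed
  finally show ?case .
qed


lemma div_dvd: "(r::nat) dvd u \<Longrightarrow> u div r dvd u"
  by (auto elim!: dvdE)

lemma div_div_self: "(a::nat) dvd u \<Longrightarrow> 0 < u \<Longrightarrow> u div (u div a) = a"
  by (auto elim!: dvdE)

lemma cyc_bound:
  fixes b p :: nat
  assumes b: "b \<ge> 2" and p: "prime p" and npb: "\<not> p dvd b"
  shows "real (p ^ multiplicity p (b ^ ord p b - 1)) \<le> exp 2 * real b ^ totient (ord p b)"
proof -
  define u where "u = ord p b"
  have cop: "coprime p b" using p npb by (simp add: prime_imp_coprime)
  have u0: "u > 0" unfolding u_def using cop by simp
  define v where "v = multiplicity p (b ^ u - 1)"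
  define R where "R = prime_factors u"
  have finR: "finite R" unfolding R_def by simp
  have Rp: "\<forall>r\<in>R. prime r \<and> r dvd u" unfolding R_def by auto
  define d where "d = (\<lambda>S. u div \<Prod>S)"
  have dvdS: "\<Prod>S dvd u" if "S \<in> Pow R" for S
    using prod_primes_dvd[OF u0] that unfolding R_def by auto
  have Spos: "\<Prod>S > 0" if "S \<in> Pow R" for S
    using dvdS[OF that] u0 by (cases "\<Prod>S = 0") auto
  have dpos: "d S > 0" if "S \<in> Pow R" for S
  proof -
    have "u div \<Prod>S \<noteq> 0" using dvdS[OF that] u0 by (simp add: dvd_div_eq_0_iff)
    then show ?thesis unfolding d_def by simp
  qed
  define Ev where "Ev = {S\<in>Pow R. even (card S)}"
  define Od where "Od = {S\<in>Pow R. odd (card S)}"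
  have finEO: "finite Ev" "finite Od" unfolding Ev_def Od_def using finR by auto
  define A where "A = (\<Prod>S\<in>Ev. b ^ d S - 1)"
  define B where "B = (\<Prod>S\<in>Od. b ^ d S - 1)"
  have fne: "b ^ d S - 1 \<noteq> 0" if "S \<in> Pow R" for S using bpow_ne0[OF b dpos[OF that]] .
  have A0: "A \<noteq> 0" unfolding A_def using fne finEO unfolding Ev_def by auto
  have B0: "B \<noteq> 0" unfolding B_def using fne finEO unfolding Od_def by auto
  have multAB: "int (multiplicity q A) - int (multiplicity q B)
      = Alt (\<lambda>e. int (multiplicity q (b ^ e - 1))) u R" if q: "prime q" for q
  proof -
    have "multiplicity q A = (\<Sum>S\<in>Ev. multiplicity q (b ^ d S - 1))"
      unfolding A_def using q fne finEO unfolding Ev_def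
      by (intro prime_elem_multiplicity_prod_distrib) auto
    moreover have "multiplicity q B = (\<Sum>S\<in>Od. multiplicity q (b ^ d S - 1))"
      unfolding B_def using q fne finEO unfolding Od_def
      by (intro prime_elem_multiplicity_prod_distrib) auto
    ultimately show ?thesis
      unfolding Alt_split[OF finR] Ev_def Od_def d_def by simp
  qed
  have key: "multiplicity q (p ^ v * B) \<le> multiplicity q A" if q: "prime q" for q
  proof -
    define h where "h = (\<lambda>e. int (multiplicity q (b ^ e - 1)))"
    have hmin: "h (gcd x y) = min (h x) (h y)" if "x > 0" "y > 0" for x y
      unfolding h_def using mult_gcd_min[OF b q that] by (simp add: min_def)
    have alt: "Alt h u R = h u - Max (insert 0 ((\<lambda>r. h (u div r)) ` R))"
      by (rule Alt_minmax[OF hmin _ finR Rp u0]) (auto simp: h_def)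
    have Rdiv: "u div r > 0" "u div r dvd u" if "r \<in> R" for r
      using Rp that u0 by (auto simp: prime_gt_0_nat dvd_div_eq_0_iff intro!: gr0I div_dvd)
    have le: "h (u div r) \<le> h u" if r: "r \<in> R" for r
    proof -
      have "ord (b ^ (u div r) - 1) b dvd u div r"
        using pow_dvd_ord_iff[of b "b ^ (u div r) - 1" "u div r"] b by simp
      then have "b ^ (u div r) - 1 dvd b ^ u - 1"
        using pow_dvd_ord_iff[of b "b ^ (u div r) - 1" u] b Rdiv[OF r] dvd_trans by auto
      then have "multiplicity q (b ^ (u div r) - 1) \<le> multiplicity q (b ^ u - 1)"
        using dvd_imp_multiplicity_le bpow_ne0[OF b u0] by blast
      then show ?thesis unfolding h_def by simp
    qed
    have MaxR: "Max (insert 0 ((\<lambda>r. h (u div r)) ` R)) \<le> h u"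
      using le finR by (subst Max_le_iff) (auto simp: h_def)
    have M0: "h u \<ge> 0" by (simp add: h_def)
    show ?thesis
    proof (cases "q = p")
      case True
      have z: "h (u div r) = 0" if r: "r \<in> R" for r
      proof -
        have rp: "prime r" "r dvd u" using Rp r by auto
        have lt: "u div r < u" using rp u0 prime_gt_1_nat[of r] by (intro div_less_dividend) auto
        have "\<not> ord p b dvd u div r"
          using Rdiv[OF r] lt unfolding u_def by (meson dvd_imp_le leD)
        then have "\<not> p dvd b ^ (u div r) - 1" using pow_dvd_ord_iff[of b p] b by simp
        then show ?thesis unfolding h_def True using not_dvd_imp_multiplicity_0 by simp
      qed
      have "(\<lambda>r. h (u div r)) ` R \<subseteq> {0}" using z by auto
      then have e0: "insert 0 ((\<lambda>r. h (u div r)) ` R) = {0}" by auto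
      have "Alt h u R = h u" unfolding alt e0 by simp
      then have "int (multiplicity p A) - int (multiplicity p B) = int v"
        using multAB[OF p] unfolding h_def v_def True by simp
      then show ?thesis using True p B0
        by (simp add: prime_elem_multiplicity_mult_distrib)
    next
      case False
      have "Alt h u R \<ge> 0" using alt MaxR by simp
      then have "multiplicity q B \<le> multiplicity q A" using multAB[OF q] unfolding h_def by simp
      then show ?thesis using False p q B0
        by (simp add: prime_elem_multiplicity_mult_distrib multiplicity_distinct_prime_power)
    qed
  qed
  have "p ^ v * B dvd A"
    using key B0 p by (intro multiplicity_le_imp_dvd) (auto simp: prime_gt_0_nat)
  then have pvB: "p ^ v * B \<le> A" using A0 by (simp add: dvd_imp_le)
  have sumE: "(\<Sum>S\<in>Ev. d S) = totient u + (\<Sum>S\<in>Od. d S)"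
  proof -
    have "real (totient u) = real u * (\<Prod>r\<in>R. 1 - 1 / real r)"
      unfolding R_def by (rule totient_formula2)
    also have "\<dots> = Alt (\<lambda>x. real x) u R" using Alt_id[OF finR Rp] by simp
    also have "\<dots> = real (\<Sum>S\<in>Ev. d S) - real (\<Sum>S\<in>Od. d S)"
      unfolding Alt_split[OF finR] Ev_def Od_def d_def by simp
    finally show ?thesis by linarith
  qed
  have Ale: "real A \<le> real b ^ (\<Sum>S\<in>Ev. d S)"
  proof -
    have "real A = (\<Prod>S\<in>Ev. real (b ^ d S - 1))" unfolding A_def by simp
    also have "\<dots> \<le> (\<Prod>S\<in>Ev. real b ^ d S)"
      by (intro prod_mono) (auto simp: of_nat_diff)
    also have "\<dots> = real b ^ (\<Sum>S\<in>Ev. d S)" by (simp add: power_sum)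
    finally show ?thesis .
  qed
  define t where "t = (\<lambda>S. (1 / real b) ^ d S)"
  have t01: "0 \<le> t S" "t S \<le> 1/2" if "S \<in> Pow R" for S
  proof -
    show "0 \<le> t S" unfolding t_def by simp
    have "(1 / real b) ^ d S \<le> (1 / real b) ^ 1"
      using dpos[OF that] b by (intro power_decreasing) auto
    also have "\<dots> \<le> 1/2" using b by (simp add: field_simps)
    finally show "t S \<le> 1/2" unfolding t_def .
  qed
  have injd: "inj_on d (Pow R)"
  proof (rule inj_onI)
    fix S S' assume S: "S \<in> Pow R" "S' \<in> Pow R" "d S = d S'"
    have "\<Prod>S = u div d S" unfolding d_def using div_div_self[OF dvdS[OF S(1)] u0] by simp
    moreover have "\<Prod>S' = u div d S'" unfolding d_def using div_div_self[OF dvdS[OF S(2)] u0] by simp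
    ultimately have "\<Prod>S = \<Prod>S'" using S(3) by simp
    moreover have "inj_on Prod (Pow R)"
      by (rule inj_on_Prod_primes) (use Rp finR finite_subset in auto)
    ultimately show "S = S'" using S by (auto dest: inj_onD)
  qed
  have sumt: "(\<Sum>S\<in>Od. t S) \<le> 1"
  proof -
    have "(\<Sum>S\<in>Od. t S) \<le> (\<Sum>S\<in>Pow R. t S)"
      using finR t01 by (intro sum_mono2) (auto simp: Od_def)
    also have "\<dots> = (\<Sum>k\<in>d ` Pow R. (1 / real b) ^ k)"
      unfolding t_def by (subst sum.reindex[OF injd]) auto
    also have "\<dots> \<le> (\<Sum>k\<in>{1..u}. (1 / real b) ^ k)"
    proof (rule sum_mono2)
      show "d ` Pow R \<subseteq> {1..u}"
        using dpos unfolding d_def by (auto simp: Suc_le_eq div_le_dividend)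
    qed auto
    also have "\<dots> \<le> 1 - (1 / real b) ^ u" using b by (intro geom_le) (auto simp: field_simps)
    also have "\<dots> \<le> 1" by simp
    finally show ?thesis .
  qed
  have Bge: "exp (-2) * real b ^ (\<Sum>S\<in>Od. d S) \<le> real B"
  proof -
    have "exp (-2) \<le> exp (- 2 * (\<Sum>S\<in>Od. t S))" using sumt by simp
    also have "\<dots> = (\<Prod>S\<in>Od. exp (- 2 * t S))"
      by (simp add: exp_sum[OF finEO(2)] sum_distrib_left)
    also have "\<dots> \<le> (\<Prod>S\<in>Od. 1 - t S)"
    proof (intro prod_mono conjI)
      fix S assume S: "S \<in> Od"
      then have "S \<in> Pow R" unfolding Od_def by simp
      then show "exp (- 2 * t S) \<le> 1 - t S" using t01 exp_le_one_minus by blast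
    qed simp
    finally have 1: "exp (-2) \<le> (\<Prod>S\<in>Od. 1 - t S)" .
    have "exp (-2) * real b ^ (\<Sum>S\<in>Od. d S) \<le> (\<Prod>S\<in>Od. 1 - t S) * (\<Prod>S\<in>Od. real b ^ d S)"
      using 1 by (simp add: power_sum) (intro mult_right_mono prod_nonneg, auto)
    also have "\<dots> = (\<Prod>S\<in>Od. real b ^ d S * (1 - t S))" by (simp add: prod.distrib mult.commute)
    also have "\<dots> = (\<Prod>S\<in>Od. real (b ^ d S - 1))"
    proof (rule prod.cong[OF refl])
      fix S assume "S \<in> Od"
      have "real b ^ d S \<ge> 1" using b by simp
      then show "real b ^ d S * (1 - t S) = real (b ^ d S - 1)"
        unfolding t_def using b by (simp add: of_nat_diff field_simps power_one_over)
    qed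
    also have "\<dots> = real B" unfolding B_def by simp
    finally show ?thesis .
  qed
  have "real (p ^ v) * (exp (-2) * real b ^ (\<Sum>S\<in>Od. d S)) \<le> real (p ^ v) * real B"
    using Bge by (intro mult_left_mono) auto
  also have "\<dots> \<le> real A" using pvB by (metis of_nat_le_iff of_nat_mult)
  also have "\<dots> \<le> real b ^ totient u * real b ^ (\<Sum>S\<in>Od. d S)"
    using Ale sumE by (simp add: power_add)
  finally have "real (p ^ v) * exp (-2) * real b ^ (\<Sum>S\<in>Od. d S) \<le> real b ^ totient u * real b ^ (\<Sum>S\<in>Od. d S)"
    by (simp add: mult.assoc)
  then have "real (p ^ v) * exp (-2) \<le> real b ^ totient u"
    using b by (simp add: mult_le_cancel_right)
  then have "real (p ^ v) \<le> exp 2 * real b ^ totient u"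
    by (simp add: exp_minus field_simps)
  then show ?thesis unfolding v_def u_def .
qed


lemma geom_nat:
  fixes x :: nat assumes "x \<ge> 1"
  shows "x ^ n - 1 = (x - 1) * (\<Sum>i<n. x ^ i)"
proof -
  have "int (x ^ n - 1) = int x ^ n - 1" using assms by (simp add: of_nat_diff)
  also have "\<dots> = (int x - 1) * (\<Sum>i<n. int x ^ i)" by (rule power_diff_1_eq)
  also have "\<dots> = int ((x - 1) * (\<Sum>i<n. x ^ i))" using assms by (simp add: of_nat_diff)
  finally show ?thesis by linarith
qed

lemma sum_pow_dvd_iff:
  fixes x p :: nat assumes "x \<ge> 1" "p dvd x - 1"
  shows "p dvd (\<Sum>i<k. x ^ i) \<longleftrightarrow> p dvd k"
proof -
  have "int p dvd int (x - 1)" using assms(2) by (simp only: of_nat_dvd_iff)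
  then have d1: "int p dvd int x - 1" using assms(1) by (simp add: of_nat_diff)
  have "int p dvd (\<Sum>i<k. (int x ^ i - 1))"
  proof (rule dvd_sum)
    fix i show "int p dvd int x ^ i - 1"
      using d1 power_diff_1_eq[of "int x" i] by (simp add: dvd_mult2)
  qed
  then have D: "int p dvd (\<Sum>i<k. int x ^ i) - int k" by (simp add: sum_subtractf)
  have "int p dvd (\<Sum>i<k. int x ^ i) \<longleftrightarrow> int p dvd int k"
  proof
    assume "int p dvd (\<Sum>i<k. int x ^ i)"
    from dvd_diff[OF this D] show "int p dvd int k" by simp
  next
    assume "int p dvd int k"
    from dvd_add[OF D this] show "int p dvd (\<Sum>i<k. int x ^ i)" by simp
  qed
  moreover have "int (\<Sum>i<k. x ^ i) = (\<Sum>i<k. int x ^ i)" by simp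
  ultimately show ?thesis by (metis of_nat_dvd_iff)
qed

lemma sum_pow_not_p2:
  fixes x p :: nat assumes p: "prime p" "odd p" and x: "x \<ge> 1" "p dvd x - 1"
  shows "\<not> p\<^sup>2 dvd (\<Sum>i<p. x ^ i)"
proof
  assume H: "p\<^sup>2 dvd (\<Sum>i<p. x ^ i)"
  obtain t where t: "x - 1 = p * t" using x by auto
  define y where "y = int x"
  have "x = 1 + p * t" using t x by simp
  then have yt: "y = 1 + int p * int t" unfolding y_def by simp
  define P where "P = int p"
  have pw: "P\<^sup>2 dvd y ^ n - 1 - int n * P * int t" for n
  proof (induction n)
    case 0 then show ?case by simp
  next
    case (Suc n)
    have "y ^ Suc n - 1 - int (Suc n) * P * int t
        = (y ^ n - 1 - int n * P * int t) * (1 + P * int t) + P\<^sup>2 * (int n * int t * int t)"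
      unfolding yt P_def by (simp add: algebra_simps power2_eq_square)
    moreover have "P\<^sup>2 dvd (y ^ n - 1 - int n * P * int t) * (1 + P * int t) + P\<^sup>2 * (int n * int t * int t)"
      using Suc by (intro dvd_add dvd_mult2) auto
    ultimately show ?case by simp
  qed
  have sm: "P\<^sup>2 dvd 2 * (\<Sum>i<n. y ^ i) - 2 * int n - P * int t * int n * (int n - 1)" for n
  proof (induction n)
    case 0 then show ?case by simp
  next
    case (Suc n)
    have "2 * (\<Sum>i<Suc n. y ^ i) - 2 * int (Suc n) - P * int t * int (Suc n) * (int (Suc n) - 1)
       = (2 * (\<Sum>i<n. y ^ i) - 2 * int n - P * int t * int n * (int n - 1))
         + 2 * (y ^ n - 1 - int n * P * int t)"
      by (simp add: algebra_simps)
    note eq = this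
    have "P\<^sup>2 dvd (2 * (\<Sum>i<n. y ^ i) - 2 * int n - P * int t * int n * (int n - 1))
         + 2 * (y ^ n - 1 - int n * P * int t)"
      using Suc pw[of n] by (intro dvd_add dvd_mult) auto
    then show ?case unfolding eq .
  qed
  have e: "P * int t * int p * (int p - 1) = P\<^sup>2 * (int t * (int p - 1))"
    unfolding P_def by (simp add: power2_eq_square algebra_simps)
  have s1: "P\<^sup>2 dvd 2 * (\<Sum>i<p. y ^ i) - 2 * int p - P\<^sup>2 * (int t * (int p - 1))"
    using sm[of p] unfolding e .
  have "P\<^sup>2 dvd (2 * (\<Sum>i<p. y ^ i) - 2 * int p - P\<^sup>2 * (int t * (int p - 1))) + P\<^sup>2 * (int t * (int p - 1))"
    using s1 by (rule dvd_add) simp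
  then have s2: "P\<^sup>2 dvd 2 * (\<Sum>i<p. y ^ i) - 2 * int p" by simp
  have "int (p\<^sup>2) dvd int (\<Sum>i<p. x ^ i)" using H by (simp only: of_nat_dvd_iff)
  then have "P\<^sup>2 dvd (\<Sum>i<p. y ^ i)" unfolding P_def y_def by simp
  then have s3: "P\<^sup>2 dvd 2 * (\<Sum>i<p. y ^ i)" by (rule dvd_mult)
  have "P\<^sup>2 dvd 2 * (\<Sum>i<p. y ^ i) - (2 * (\<Sum>i<p. y ^ i) - 2 * int p)"
    using s3 s2 by (rule dvd_diff)
  then have "P\<^sup>2 dvd 2 * int p" by simp
  then have "P * P dvd P * 2" unfolding P_def by (simp add: power2_eq_square mult.commute)
  moreover have "P \<noteq> 0" unfolding P_def using p prime_gt_0_nat by simp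
  ultimately have "P dvd 2" using dvd_mult_cancel_left by blast
  then have "int p dvd int 2" unfolding P_def by simp
  then have "p dvd 2" by (simp only: of_nat_dvd_iff)
  then have "p \<le> 2" by (simp add: dvd_imp_le)
  then have "p = 2" using prime_ge_2_nat[OF p(1)] by simp
  then show False using p by simp
qed

lemma mult_le1:
  fixes p s :: nat assumes "prime p" "s \<noteq> 0" "\<not> p\<^sup>2 dvd s"
  shows "multiplicity p s \<le> 1"
proof -
  have "multiplicity p s < 2"
    using assms by (intro multiplicity_lessI) (auto simp: not_prime_unit)
  then show ?thesis by simp
qed

lemma lte:
  fixes p x k :: nat
  assumes p: "prime p" and x: "x \<ge> 1" "p dvd x - 1" and c: "odd p \<or> 4 dvd x - 1" and k: "k \<ge> 1"
  shows "multiplicity p (x ^ k - 1) \<le> multiplicity p (x - 1) + multiplicity p k"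
  using k
proof (induction k rule: less_induct)
  case (less k)
  show ?case
  proof (cases "x = 1")
    case True then show ?thesis by simp
  next
    case False
    then have x2: "x \<ge> 2" using x by simp
    have ne: "x ^ j - 1 \<noteq> 0" if "j > 0" for j using bpow_ne0[OF x2 that] .
    have sne: "(\<Sum>i<j. x ^ i) \<noteq> 0" if "j > 0" for j
      using geom_nat[OF x(1), of j] ne[OF that] by auto
    show ?thesis
    proof (cases "p dvd k")
      case False
      have "\<not> p dvd (\<Sum>i<k. x ^ i)" using False sum_pow_dvd_iff[OF x] by simp
      then have "multiplicity p (\<Sum>i<k. x ^ i) = 0" by (rule not_dvd_imp_multiplicity_0)
      moreover have "multiplicity p (x ^ k - 1) = multiplicity p (x - 1) + multiplicity p (\<Sum>i<k. x ^ i)"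
        unfolding geom_nat[OF x(1), of k] using p less.prems sne ne[of 1]
        by (intro prime_elem_multiplicity_mult_distrib) auto
      ultimately show ?thesis by simp
    next
      case True
      then obtain k' where k': "k = p * k'" by auto
      have k'1: "k' \<ge> 1" using k' less.prems by (cases k') auto
      have lt: "k' < k" using k' k'1 prime_gt_1_nat[OF p] by simp
      define y where "y = x ^ k'"
      have y1: "y \<ge> 1" unfolding y_def using x by simp
      have ydvd: "x - 1 dvd y - 1" unfolding y_def using geom_nat[OF x(1), of k'] by simp
      have py: "p dvd y - 1" using ydvd x(2) dvd_trans by blast
      have yne: "y - 1 \<noteq> 0" unfolding y_def using ne k'1 by simp
      have e: "x ^ k - 1 = (y - 1) * (\<Sum>i<p. y ^ i)"
        using geom_nat[OF y1, of p] by (simp add: k' y_def power_mult mult.commute)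
      have sy0: "(\<Sum>i<p. y ^ i) \<noteq> 0"
        using e ne[of k] less.prems by auto
      have m1: "multiplicity p (\<Sum>i<p. y ^ i) \<le> 1"
      proof (rule mult_le1[OF p sy0])
        show "\<not> p\<^sup>2 dvd (\<Sum>i<p. y ^ i)"
        proof (cases "odd p")
          case True then show ?thesis using sum_pow_not_p2[OF p True y1 py] by simp
        next
          case False
          then have "2 dvd p" by simp
          then have p2: "p = 2" using primes_dvd_imp_eq[OF two_is_prime_nat p] by simp
          have "4 dvd x - 1" using c False by simp
          then have "4 dvd y - 1" using ydvd dvd_trans by blast
          then obtain s where s: "y - 1 = 4 * s" by auto
          have "(\<Sum>i<p. y ^ i) = 2 + 4 * s" unfolding p2 using s y1 by (simp add: numeral_2_eq_2)
          moreover have "\<not> (4::nat) dvd 2 + 4 * s" by presburger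
          ultimately show ?thesis unfolding p2 by (simp add: power2_eq_square)
        qed
      qed
      have mk: "multiplicity p k = multiplicity p k' + 1"
        unfolding k' using p k'1 by (simp add: prime_elem_multiplicity_mult_distrib)
      have "multiplicity p (x ^ k - 1) = multiplicity p (y - 1) + multiplicity p (\<Sum>i<p. y ^ i)"
        unfolding e using p yne sy0 by (intro prime_elem_multiplicity_mult_distrib) auto
      also have "\<dots> \<le> multiplicity p (x - 1) + multiplicity p k' + 1"
        using less.IH[OF lt k'1] m1 unfolding y_def by simp
      also have "\<dots> = multiplicity p (x - 1) + multiplicity p k" using mk by simp
      finally show ?thesis .
    qed
  qed
qed


lemma exp2_le9: "exp (2::real) \<le> 9"
proof -
  have "exp (2::real) = exp 1 * exp 1" by (simp flip: exp_add)
  also have "\<dots> \<le> 3 * 3" using exp_le by (intro mult_mono) auto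
  finally show ?thesis by simp
qed

lemma ppow_bound:
  fixes b T p :: nat
  assumes b: "b \<ge> 2" and T: "T \<ge> 1" and p: "prime p"
  shows "real (p ^ multiplicity p (b ^ T - 1)) \<le> 9 * real b ^ (totient T + 2) * real T"
proof -
  have bT1: "b ^ T \<ge> 1" using b by simp
  have RHS1: "1 \<le> 9 * real b ^ (totient T + 2) * real T"
  proof -
    have "1 \<le> real b ^ (totient T + 2)" using b by (intro one_le_power) simp
    moreover have "1 \<le> real T" using T by simp
    ultimately have "1 * 1 \<le> real b ^ (totient T + 2) * real T" by (intro mult_mono) auto
    then show ?thesis by simp
  qed
  have ne: "b ^ T - 1 \<noteq> 0" using bpow_ne0[OF b] T by simp
  show ?thesis
  proof (cases "p dvd b ^ T - 1")
    case False
    then have "multiplicity p (b ^ T - 1) = 0" by (rule not_dvd_imp_multiplicity_0)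
    then show ?thesis using RHS1 by simp
  next
    case pd: True
    have npb: "\<not> p dvd b"
    proof
      assume "p dvd b"
      then have "p dvd b ^ T" using T dvd_power_le[of p b 1 T] by simp
      then have "p dvd b ^ T - (b ^ T - 1)" using pd by (rule dvd_diff_nat)
      then have "p dvd 1" using bT1 by simp
      then show False using p by simp
    qed
    show ?thesis
    proof (cases "p = 2")
      case False
      then have "p > 2" using prime_ge_2_nat[OF p] by simp
      then have podd: "odd p" using prime_odd_nat[OF p] by simp
      define u where "u = ord p b"
      have uT: "u dvd T" unfolding u_def using pd pow_dvd_ord_iff[of b p T] b by simp
      have cop: "coprime p b" using p npb by (simp add: prime_imp_coprime)
      have u0: "u > 0" unfolding u_def using cop by simp
      define k where "k = T div u"
      have Tk: "T = u * k" unfolding k_def using uT by simp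
      have k1: "k \<ge> 1" using Tk T by (cases k) auto
      define x where "x = b ^ u"
      have x1: "x \<ge> 1" unfolding x_def using b by simp
      have px: "p dvd x - 1" unfolding x_def u_def using pow_dvd_ord_iff[of b p "ord p b"] b by simp
      have "multiplicity p (x ^ k - 1) \<le> multiplicity p (x - 1) + multiplicity p k"
        by (rule lte[OF p x1 px _ k1]) (simp add: podd)
      moreover have "x ^ k = b ^ T" unfolding x_def Tk by (simp add: power_mult)
      ultimately have mle: "multiplicity p (b ^ T - 1) \<le> multiplicity p (b ^ u - 1) + multiplicity p k"
        unfolding x_def by simp
      have "real (p ^ multiplicity p (b ^ T - 1)) \<le> real (p ^ (multiplicity p (b ^ u - 1) + multiplicity p k))"
        using power_increasing[OF mle, of p] prime_ge_1_nat[OF p] by (simp only: of_nat_le_iff)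
      also have "\<dots> = real (p ^ multiplicity p (b ^ u - 1)) * real (p ^ multiplicity p k)"
        by (simp add: power_add)
      also have "\<dots> \<le> (exp 2 * real b ^ totient u) * real T"
      proof (rule mult_mono)
        show "real (p ^ multiplicity p (b ^ u - 1)) \<le> exp 2 * real b ^ totient u"
          unfolding u_def by (rule cyc_bound[OF b p npb])
        have "p ^ multiplicity p k \<le> k" using k1 by (intro dvd_imp_le multiplicity_dvd) auto
        also have "k \<le> T" using Tk u0 by simp
        finally show "real (p ^ multiplicity p k) \<le> real T" by simp
      qed auto
      also have "\<dots> \<le> (9 * real b ^ (totient T + 2)) * real T"
      proof (rule mult_right_mono)
        have "totient u \<le> totient T" using uT T by (intro totient_dvd_mono) auto
        then have "real b ^ totient u \<le> real b ^ (totient T + 2)" using b by (intro power_increasing) auto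
        then show "exp 2 * real b ^ totient u \<le> 9 * real b ^ (totient T + 2)"
          using exp2_le9 by (intro mult_mono) auto
      qed auto
      finally show ?thesis by simp
    next
      case p2: True
      have bodd: "odd b" using npb p2 by simp
      then obtain c where c: "b = 2 * c + 1" by (metis oddE)
      define x where "x = b ^ 2"
      have x1: "x \<ge> 1" unfolding x_def using b by simp
      have x4: "x - 1 = 4 * (c * c + c)" unfolding x_def c by (simp add: power2_eq_square algebra_simps)
      have px: "p dvd x - 1" unfolding p2 x4 by simp
      have "multiplicity p (x ^ T - 1) \<le> multiplicity p (x - 1) + multiplicity p T"
        by (rule lte[OF p x1 px _ T]) (rule disjI2, simp only: x4 dvd_triv_left)
      moreover have "b ^ T - 1 dvd x ^ T - 1"
      proof -
        have "x ^ T - 1 = (b ^ T) ^ 2 - 1" unfolding x_def by (simp flip: power_mult add: mult.commute)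
        also have "\<dots> = (b ^ T - 1) * (\<Sum>i<2. (b ^ T) ^ i)" by (rule geom_nat[OF bT1])
        finally show ?thesis by simp
      qed
      moreover have "x ^ T - 1 \<noteq> 0" unfolding x_def using bpow_ne0[OF b, of "2 * T"] T
        by (simp add: power_mult)
      ultimately have mle: "multiplicity p (b ^ T - 1) \<le> multiplicity p (x - 1) + multiplicity p T"
        using dvd_imp_multiplicity_le by (meson le_trans)
      have "real (p ^ multiplicity p (b ^ T - 1)) \<le> real (p ^ (multiplicity p (x - 1) + multiplicity p T))"
        using power_increasing[OF mle, of p] prime_ge_1_nat[OF p] by (simp only: of_nat_le_iff)
      also have "\<dots> = real (p ^ multiplicity p (x - 1)) * real (p ^ multiplicity p T)"
        by (simp add: power_add)
      also have "\<dots> \<le> real (x - 1) * real T"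
      proof (rule mult_mono)
        have "x - 1 \<noteq> 0" unfolding x4 using b c by auto
        then have "p ^ multiplicity p (x - 1) \<le> x - 1"
          by (intro dvd_imp_le multiplicity_dvd) auto
        then show "real (p ^ multiplicity p (x - 1)) \<le> real (x - 1)" by (simp only: of_nat_le_iff)
        show "real (p ^ multiplicity p T) \<le> real T" using T by (simp add: dvd_imp_le multiplicity_dvd)
      qed auto
      also have "\<dots> \<le> (9 * real b ^ (totient T + 2)) * real T"
      proof (rule mult_right_mono)
        have "real (x - 1) \<le> real b ^ 2" unfolding x_def by simp
        also have "\<dots> \<le> real b ^ (totient T + 2)" using b by (intro power_increasing) auto
        also have "\<dots> \<le> 9 * real b ^ (totient T + 2)" by simp
        finally show "real (x - 1) \<le> 9 * real b ^ (totient T + 2)" .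
      qed auto
      finally show ?thesis by simp
    qed
  qed
qed


definition hsum :: "nat \<Rightarrow> real" where "hsum y = (\<Sum>k\<in>{1..y}. 1 / real k)"

lemma ln_le_hsum: "ln (real y + 1) \<le> hsum y"
proof (induction y)
  case 0 then show ?case by (simp add: hsum_def)
next
  case (Suc y)
  have e: "real (Suc y) + 1 = (real y + 1) * (1 + 1 / (real y + 1))" by (simp add: field_simps)
  have "ln (real (Suc y) + 1) = ln (real y + 1) + ln (1 + 1 / (real y + 1))"
    unfolding e by (rule ln_mult_pos) (auto simp: add_pos_pos)
  also have "ln (1 + 1 / (real y + 1)) \<le> 1 / (real y + 1)" by (rule ln_add_one_self_le_self) simp
  also have "ln (real y + 1) \<le> hsum y" by (rule Suc)
  finally show ?case by (simp add: hsum_def add.commute)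
qed

lemma hsum_ge1: "y \<ge> 1 \<Longrightarrow> hsum y \<ge> 1"
proof -
  assume y: "y \<ge> 1"
  have "(\<Sum>k\<in>{1..1}. 1 / real k) \<le> (\<Sum>k\<in>{1..y}. 1 / real k)"
    using y by (intro sum_mono2) auto
  then show ?thesis by (simp add: hsum_def)
qed

lemma hsum_prod_le:
  fixes y :: nat
  defines "P \<equiv> prime_factors (fact y)"
  shows "hsum y * (\<Prod>p\<in>P. 1 - 1 / real p) \<le> 1"
proof -
  have finP: "finite P" unfolding P_def by simp
  have Pp: "\<And>p. p \<in> P \<Longrightarrow> prime p" unfolding P_def by auto
  have fne: "fact y \<noteq> (0::nat)" by simp
  define f where "f = (\<lambda>k::nat. restrict (\<lambda>p. multiplicity p k) P)"
  have pfk: "prime_factors k \<subseteq> P" if k: "k \<in> {1..y}" for k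
  proof -
    have "k dvd fact y" using k by (intro dvd_fact) auto
    then show ?thesis unfolding P_def using dvd_prime_factors[OF fne] by blast
  qed
  have kprod: "real k = (\<Prod>p\<in>P. real p ^ multiplicity p k)" if k: "k \<in> {1..y}" for k
  proof -
    have "k = (\<Prod>p\<in>prime_factors k. p ^ multiplicity p k)" using k by (intro prime_factorization_nat) auto
    also have "\<dots> = (\<Prod>p\<in>P. p ^ multiplicity p k)"
    proof (rule prod.mono_neutral_left[OF finP pfk[OF k]])
      show "\<forall>i\<in>P - prime_factors k. i ^ multiplicity i k = 1"
        using k by (auto simp: prime_factors_multiplicity Pp)
    qed
    finally have kk: "k = (\<Prod>p\<in>P. p ^ multiplicity p k)" .
    have "real k = real (\<Prod>p\<in>P. p ^ multiplicity p k)" using kk by (rule arg_cong)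
    also have "\<dots> = (\<Prod>p\<in>P. real p ^ multiplicity p k)" by simp
    finally show ?thesis .
  qed
  have kinv: "1 / real k = (\<Prod>p\<in>P. (1 / real p) ^ f k p)" if k: "k \<in> {1..y}" for k
  proof -
    have "(\<Prod>p\<in>P. (1 / real p) ^ f k p) * real k = (\<Prod>p\<in>P. (1 / real p) ^ multiplicity p k * real p ^ multiplicity p k)"
      unfolding kprod[OF k] f_def by (simp add: prod.distrib)
    also have "\<dots> = 1" using Pp by (intro prod.neutral) (auto simp: power_one_over prime_gt_0_nat)
    finally show ?thesis using k by (simp add: field_simps)
  qed
  have fPi: "f k \<in> PiE P (\<lambda>_. {..<Suc y})" if k: "k \<in> {1..y}" for k
  proof -
    have "multiplicity p k < Suc y" if p: "p \<in> P" for p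
    proof -
      have "2 ^ multiplicity p k \<le> p ^ multiplicity p k"
        using Pp[OF p] prime_ge_2_nat by (intro power_mono) auto
      also have "\<dots> \<le> k" using k by (intro dvd_imp_le multiplicity_dvd) auto
      finally have "2 ^ multiplicity p k \<le> k" .
      moreover have "multiplicity p k < 2 ^ multiplicity p k" by (rule less_exp)
      ultimately show ?thesis using k by (simp only: atLeastAtMost_iff) linarith
    qed
    then show ?thesis unfolding f_def by auto
  qed
  have injf: "inj_on f {1..y}"
  proof (rule inj_onI)
    fix k k' assume kk: "k \<in> {1..y}" "k' \<in> {1..y}" "f k = f k'"
    have "multiplicity p k = multiplicity p k'" if p: "prime p" for p
    proof (cases "p \<in> P")
      case True
      then show ?thesis using kk(3) unfolding f_def by (metis restrict_apply')
    next
      case False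
      then have "p \<notin> prime_factors k" "p \<notin> prime_factors k'" using pfk kk by auto
      then show ?thesis using p kk by (auto simp: prime_factors_multiplicity)
    qed
    then have "normalize k = normalize k'" using kk by (intro multiplicity_eq_imp_eq) auto
    then show "k = k'" by simp
  qed
  have "hsum y = (\<Sum>k\<in>{1..y}. \<Prod>p\<in>P. (1 / real p) ^ f k p)"
    unfolding hsum_def using kinv by (intro sum.cong) auto
  also have "\<dots> = (\<Sum>g\<in>f ` {1..y}. \<Prod>p\<in>P. (1 / real p) ^ g p)"
    by (subst sum.reindex[OF injf]) simp
  also have "\<dots> \<le> (\<Sum>g\<in>PiE P (\<lambda>_. {..<Suc y}). \<Prod>p\<in>P. (1 / real p) ^ g p)"
  proof (rule sum_mono2)
    show "finite (PiE P (\<lambda>_. {..<Suc y}))" using finP by (intro finite_PiE) auto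
    show "f ` {1..y} \<subseteq> PiE P (\<lambda>_. {..<Suc y})" using fPi by blast
    fix g show "0 \<le> (\<Prod>p\<in>P. (1 / real p) ^ g p)" by (intro prod_nonneg) auto
  qed
  also have "\<dots> = (\<Prod>p\<in>P. \<Sum>j\<in>{..<Suc y}. (1 / real p) ^ j)"
    by (rule prod_sum_PiE[symmetric]) (auto simp: finP)
  finally have hs: "hsum y \<le> (\<Prod>p\<in>P. \<Sum>j\<in>{..<Suc y}. (1 / real p) ^ j)" .
  have nn: "0 \<le> (\<Prod>p\<in>P. 1 - 1 / real p)"
  proof (intro prod_nonneg)
    fix p assume "p \<in> P"
    then have "real p \<ge> 1" using Pp prime_ge_1_nat by simp
    then show "0 \<le> 1 - 1 / real p" by (simp add: field_simps)
  qed
  have "hsum y * (\<Prod>p\<in>P. 1 - 1 / real p) \<le> (\<Prod>p\<in>P. \<Sum>j\<in>{..<Suc y}. (1 / real p) ^ j) * (\<Prod>p\<in>P. 1 - 1 / real p)"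
    using hs nn by (rule mult_right_mono)
  also have "\<dots> = (\<Prod>p\<in>P. (1 - 1 / real p) * (\<Sum>j\<in>{..<Suc y}. (1 / real p) ^ j))"
    by (simp add: prod.distrib mult.commute)
  also have "\<dots> = (\<Prod>p\<in>P. 1 - (1 / real p) ^ Suc y)"
    by (intro prod.cong refl) (simp only: one_diff_power_eq)
  also have "\<dots> \<le> 1"
  proof (intro prod_le_1 conjI)
    fix p assume "p \<in> P"
    then have p1: "real p \<ge> 1" using Pp prime_ge_1_nat by simp
    then have a: "0 \<le> 1 / real p" "1 / real p \<le> 1" by (auto simp: field_simps)
    have "(1 / real p) ^ Suc y \<le> 1" by (rule power_le_one[OF a])
    moreover have "0 \<le> (1 / real p) ^ Suc y" by (rule zero_le_power[OF a(1)])
    ultimately show "0 \<le> 1 - (1 / real p) ^ Suc y" "1 - (1 / real p) ^ Suc y \<le> 1" by auto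
  qed
  finally show ?thesis .
qed

lemma totient_mult_le:
  fixes m N :: nat assumes "m \<ge> 1" "N \<ge> 1"
  shows "real (totient (m * N)) \<le> real m * real (totient N)"
proof -
  define A where "A = prime_factors (m * N)"
  define B where "B = prime_factors N"
  have BA: "B \<subseteq> A" unfolding A_def B_def using assms by (intro dvd_prime_factors) auto
  have finA: "finite A" unfolding A_def by simp
  have g01: "0 \<le> 1 - 1 / real p \<and> 1 - 1 / real p \<le> 1" if "p \<in> A" for p
  proof -
    have "prime p" using that unfolding A_def by auto
    then have "real p \<ge> 1" using prime_ge_1_nat by simp
    then show ?thesis by (simp add: field_simps)
  qed
  have "(\<Prod>p\<in>A. 1 - 1 / real p) = (\<Prod>p\<in>A - B. 1 - 1 / real p) * (\<Prod>p\<in>B. 1 - 1 / real p)"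
    by (rule prod.subset_diff[OF BA finA])
  also have "\<dots> \<le> 1 * (\<Prod>p\<in>B. 1 - 1 / real p)"
    using g01 BA by (intro mult_right_mono prod_le_1 prod_nonneg) auto
  finally have le: "(\<Prod>p\<in>A. 1 - 1 / real p) \<le> (\<Prod>p\<in>B. 1 - 1 / real p)" by simp
  have "real (totient (m * N)) = real (m * N) * (\<Prod>p\<in>A. 1 - 1 / real p)"
    unfolding A_def by (rule totient_formula2)
  also have "\<dots> \<le> real (m * N) * (\<Prod>p\<in>B. 1 - 1 / real p)" using le by (intro mult_left_mono) auto
  also have "\<dots> = real m * real (totient N)"
    unfolding B_def by (simp add: totient_formula2)
  finally show ?thesis .
qed

lemma diff_le_of_le: "(a::real) - c \<le> t \<Longrightarrow> c \<le> n \<Longrightarrow> a - n \<le> t" by linarith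

lemma T_construct:
  fixes y K :: nat
  assumes y: "y \<ge> 1" and K: "K \<ge> fact y"
  shows "\<exists>T. T \<ge> 1 \<and> totient T \<le> K \<and> T \<le> K * fact y \<and> real T \<ge> real K * hsum y - fact y"
proof -
  define N :: nat where "N = fact y"
  define \<phi> where "\<phi> = totient N"
  define m where "m = K div \<phi>"
  have N1: "N \<ge> 1" unfolding N_def by simp
  have \<phi>1: "\<phi> \<ge> 1" unfolding \<phi>_def using N1 by (simp add: Suc_le_eq)
  have \<phi>N: "\<phi> \<le> N" unfolding \<phi>_def by (rule totient_le)
  have m1: "m \<ge> 1" unfolding m_def using \<phi>N K \<phi>1 unfolding N_def by (simp add: div_greater_zero_iff Suc_le_eq)
  have dm: "m * \<phi> + K mod \<phi> = K" unfolding m_def by simp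
  have mphi: "m * \<phi> \<le> K" using dm by linarith
  have rl: "K mod \<phi> < \<phi>" using \<phi>1 by simp
  define T where "T = m * N"
  have T1: "T \<ge> 1" unfolding T_def using m1 N1 by simp
  have tT: "totient T \<le> K"
  proof -
    have "real (totient T) \<le> real m * real \<phi>" unfolding T_def \<phi>_def by (rule totient_mult_le[OF m1 N1])
    also have "\<dots> = real (m * \<phi>)" by simp
    also have "\<dots> \<le> real K" using mphi by (simp only: of_nat_le_iff)
    finally show ?thesis by simp
  qed
  have "m * 1 \<le> m * \<phi>" using \<phi>1 by (intro mult_le_mono2)
  then have "m \<le> m * \<phi>" by (simp only: mult_1_right)
  then have mK: "m \<le> K" using mphi by (rule le_trans)
  have TK: "T \<le> K * fact y" unfolding T_def N_def using mK by simp
  have hn: "hsum y \<ge> 0" unfolding hsum_def by (intro sum_nonneg) auto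
  have hphi: "hsum y * real \<phi> \<le> real N"
  proof -
    have "real \<phi> = real N * (\<Prod>p\<in>prime_factors N. 1 - 1 / real p)"
      unfolding \<phi>_def by (rule totient_formula2)
    then have "hsum y * real \<phi> = real N * (hsum y * (\<Prod>p\<in>prime_factors N. 1 - 1 / real p))" by simp
    also have "\<dots> \<le> real N * 1"
      unfolding N_def using hsum_prod_le[of y] by (intro mult_left_mono) auto
    finally show ?thesis by simp
  qed
  have "real K = real m * real \<phi> + real (K mod \<phi>)" using dm by (metis of_nat_add of_nat_mult)
  moreover have "real (K mod \<phi>) \<le> real \<phi>" using rl by simp
  ultimately have "real K - real \<phi> \<le> real m * real \<phi>" by linarith
  then have "hsum y * (real K - real \<phi>) \<le> hsum y * (real m * real \<phi>)"
    using hn by (rule mult_left_mono)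
  also have "\<dots> = real m * (hsum y * real \<phi>)" by simp
  also have "\<dots> \<le> real m * real N" using hphi by (intro mult_left_mono) auto
  finally have "real K * hsum y - hsum y * real \<phi> \<le> real T" unfolding T_def by (simp add: algebra_simps)
  moreover have "hsum y * real \<phi> \<le> real N" by (rule hphi)
  ultimately have fin: "real K * hsum y - real N \<le> real T" by (rule diff_le_of_le)
  show ?thesis
  proof (intro exI conjI)
    show "T \<ge> 1" by (rule T1)
    show "totient T \<le> K" by (rule tT)
    show "T \<le> K * fact y" by (rule TK)
    show "real K * hsum y - fact y \<le> real T" using fin unfolding N_def by simp
  qed
qed


lemma main_bound:
  fixes b T n :: nat
  assumes b: "b \<ge> 2" and T: "T \<ge> 1" and c: "9 * real b ^ (totient T + 2) * real T \<le> real n"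
  shows "T \<le> digit_sum b (fact n) \<and> T \<le> digit_sum b (lcm_upto n)"
proof -
  define d where "d = b ^ T - 1"
  have "d \<noteq> 0" unfolding d_def using bpow_ne0[OF b, of T] T by simp
  then have d0: "d > 0" by simp
  have "d dvd lcm_upto n"
  proof (rule dvd_lcm_upto[OF d0])
    fix p :: nat assume p: "prime p"
    have "real (p ^ multiplicity p d) \<le> real n"
      unfolding d_def using ppow_bound[OF b T p] c by linarith
    then show "p ^ multiplicity p d \<le> n" by (simp only: of_nat_le_iff)
  qed
  moreover have "lcm_upto n dvd fact n" by (rule lcm_upto_dvd_fact)
  ultimately have "d dvd fact n" by (rule dvd_trans)
  have "(b - 1) * T \<le> digit_sum b (lcm_upto n)"
    using ds_multiple[OF b T lcm_upto_pos] \<open>d dvd lcm_upto n\<close> unfolding d_def by simp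
  moreover have "(b - 1) * T \<le> digit_sum b (fact n)"
    using ds_multiple[OF b T _ \<open>d dvd fact n\<close>[unfolded d_def]] by simp
  moreover have "1 * T \<le> (b - 1) * T" using b by (intro mult_le_mono1) simp
  then have "T \<le> (b - 1) * T" by simp
  ultimately show ?thesis by linarith
qed

lemma ds_pos:
  fixes b m :: nat assumes b: "b \<ge> 2" shows "m > 0 \<Longrightarrow> digit_sum b m \<ge> 1"
proof (induction m rule: less_induct)
  case (less m)
  show ?case
  proof (cases "m mod b = 0")
    case False then show ?thesis using ds_rec[OF b, of m] by simp
  next
    case True
    have "m div b * b = m" using True div_mult_mod_eq[of m b] by simp
    then have "m div b > 0" using less.prems by (cases "m div b") auto
    moreover have "m div b < m" using less.prems b by simp
    ultimately have "digit_sum b (m div b) \<ge> 1" using less.IH by simp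
    then show ?thesis using ds_rec[OF b, of m] by simp
  qed
qed


lemma ln2_ge: "ln (2::real) \<ge> 1/3"
proof -
  have "exp (1::real) \<le> 8" using exp_le by simp
  then have "1 \<le> ln (8::real)" by (subst ln_ge_iff) auto
  also have "ln (8::real) = 3 * ln 2"
    using ln_realpow[of 2 3] by simp
  finally show ?thesis by simp
qed

lemma nat_floor_bounds:
  fixes x :: real assumes "x \<ge> 0"
  shows "real (nat \<lfloor>x\<rfloor>) \<le> x" "x - 1 \<le> real (nat \<lfloor>x\<rfloor>)"
proof -
  have z: "0 \<le> \<lfloor>x\<rfloor>" using assms by (simp add: le_floor_iff)
  then have e: "real (nat \<lfloor>x\<rfloor>) = real_of_int \<lfloor>x\<rfloor>" by simp
  have "x < real_of_int \<lfloor>x\<rfloor> + 1" using floor_eq_iff[of x "\<lfloor>x\<rfloor>"] by simp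
  then show "x - 1 \<le> real (nat \<lfloor>x\<rfloor>)" unfolding e by linarith
  show "real (nat \<lfloor>x\<rfloor>) \<le> x" unfolding e by simp
qed

lemma xlnx_mono:
  fixes y s :: real assumes "1 \<le> y" "y \<le> s" shows "y * ln y \<le> s * ln s"
proof -
  have "ln y \<le> ln s" using assms by simp
  moreover have "0 \<le> ln y" using assms by simp
  ultimately show ?thesis using assms by (intro mult_mono) auto
qed

lemma large_n:
  fixes b :: nat assumes b: "b \<ge> 2"
  shows "\<exists>L1. \<forall>n::nat. ln (real n) \<ge> L1 \<longrightarrow>
     ln (real n) * ln (ln (ln (real n))) / (48 * ln (real b)) \<le> real (digit_sum b (fact n)) \<and>
     ln (real n) * ln (ln (ln (real n))) / (48 * ln (real b)) \<le> real (digit_sum b (lcm_upto n))"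
proof -
  define lb where "lb = ln (real b)"
  have "ln 2 \<le> ln (real b)" using b by simp
  then have lb13: "lb \<ge> 1/3" unfolding lb_def using ln2_ge by linarith
  have lb0: "lb > 0" using lb13 by simp
  have A1: "eventually (\<lambda>k::real. sqrt (ln k) * ln (sqrt (ln k)) + ln 2 \<le> ln k) at_top"
    by real_asymp
  then obtain k0 where k0: "\<And>k. k \<ge> k0 \<Longrightarrow> sqrt (ln k) * ln (sqrt (ln k)) + ln 2 \<le> ln k"
    by (auto simp: eventually_at_top_linorder)
  have A2: "((\<lambda>L::real. L^2 * exp (L/3) / exp L) \<longlongrightarrow> 0) at_top"
    by real_asymp
  have "eventually (\<lambda>L::real. L^2 * exp (L/3) / exp L < 1 / (9 * real b ^ 2)) at_top"
    using b by (intro order_tendstoD(2)[OF A2]) auto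
  then obtain L2 where L2: "\<And>L. L \<ge> L2 \<Longrightarrow> L^2 * exp (L/3) / exp L < 1 / (9 * real b ^ 2)"
    by (auto simp: eventually_at_top_linorder)
  define L1 where "L1 = max (3 * lb * (max k0 0 + 1)) (max (12 * lb) (max (36 * lb^2) (max (exp 4) (max L2 1))))"
  have L1ge: "3 * lb * (max k0 0 + 1) \<le> L1" "12 * lb \<le> L1" "36 * lb^2 \<le> L1" "exp 4 \<le> L1"
    "L2 \<le> L1" "1 \<le> L1" unfolding L1_def
    by (rule max.cobounded1,
        (rule max.coboundedI2, rule max.cobounded1),
        (rule max.coboundedI2, rule max.coboundedI2, rule max.cobounded1),
        (rule max.coboundedI2, rule max.coboundedI2, rule max.coboundedI2, rule max.cobounded1),
        (rule max.coboundedI2, rule max.coboundedI2, rule max.coboundedI2, rule max.coboundedI2, rule max.cobounded1),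
        (rule max.coboundedI2, rule max.coboundedI2, rule max.coboundedI2, rule max.coboundedI2, rule max.cobounded2))
  show ?thesis
  proof (intro exI allI impI)
    fix n :: nat
    define L where "L = ln (real n)"
    assume "L1 \<le> ln (real n)"
    then have LL1: "L1 \<le> L" unfolding L_def .
    have L1': "1 \<le> L" using LL1 L1ge by linarith
    have n0: "real n > 0"
    proof (rule ccontr)
      assume "\<not> real n > 0" then have "n = 0" by simp
      then show False using L1' unfolding L_def by simp
    qed
    have nL: "real n = exp L" unfolding L_def using n0 by simp
    define K where "K = nat \<lfloor>L / (3 * lb)\<rfloor>"
    have Lx: "L / (3 * lb) \<ge> 0" using L1' lb0 by simp
    have Kle: "real K \<le> L / (3 * lb)" unfolding K_def by (rule nat_floor_bounds(1)[OF Lx])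
    have Kge: "real K \<ge> L / (3 * lb) - 1" unfolding K_def by (rule nat_floor_bounds(2)[OF Lx])
    have K_k0: "real K \<ge> k0"
    proof -
      have "L / (3 * lb) \<ge> max k0 0 + 1" using L1ge(1) LL1 lb0 by (simp add: field_simps)
      then show ?thesis using Kge by linarith
    qed
    have K3: "real K \<ge> 3"
    proof -
      have "L / (3 * lb) \<ge> 4" using L1ge(2) LL1 lb0 by (simp add: field_simps)
      then show ?thesis using Kge by linarith
    qed
    have K6: "real K \<ge> L / (6 * lb)"
    proof -
      have "L / (6 * lb) \<ge> 1" using L1ge(2) LL1 lb0 by (simp add: field_simps)
      moreover have "L / (3 * lb) = 2 * (L / (6 * lb))" by (simp add: field_simps)
      ultimately show ?thesis using Kge by linarith
    qed
    have KsL: "real K \<ge> sqrt L"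
    proof -
      have "sqrt L \<ge> 6 * lb"
      proof -
        have "(6 * lb)^2 \<le> L" using L1ge(3) LL1 by (simp add: power2_eq_square)
        then show ?thesis by (rule real_le_rsqrt)
      qed
      then have q1: "sqrt L / (6 * lb) \<ge> 1" using lb0 by (simp add: field_simps)
      have sq: "sqrt L * sqrt L = L" using L1' real_sqrt_mult_self[of L] by (simp add: abs_of_nonneg)
      have "sqrt L * (sqrt L / (6 * lb)) = L / (6 * lb)" unfolding times_divide_eq_right sq by (rule refl)
      then have "L / (6 * lb) = sqrt L * (sqrt L / (6 * lb))" by (rule sym)
      also have "\<dots> \<ge> sqrt L * 1" using q1 L1' by (intro mult_left_mono) auto
      finally have "L / (6 * lb) \<ge> sqrt L" by simp
      then show ?thesis using K6 by linarith
    qed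
    have KL: "real K \<le> L"
    proof -
      have "L / (3 * lb) \<le> L" using lb13 L1' by (simp add: field_simps)
      then show ?thesis using Kle by linarith
    qed
    have lnK1: "ln (real K) \<ge> 1"
    proof -
      have "exp 1 \<le> real K" using K3 exp_le by linarith
      then show ?thesis using K3 by (subst ln_ge_iff) auto
    qed
    define s where "s = sqrt (ln (real K))"
    have s1: "s \<ge> 1" unfolding s_def using lnK1 by simp
    define y where "y = nat \<lfloor>s\<rfloor>"
    have s0: "s \<ge> 0" using s1 by simp
    have yle: "real y \<le> s" unfolding y_def by (rule nat_floor_bounds(1)[OF s0])
    have yge: "real y + 1 \<ge> s" using nat_floor_bounds(2)[OF s0] unfolding y_def by linarith
    have y1: "y \<ge> 1" unfolding y_def using s1 by (simp add: le_nat_floor)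
    have fy: "fact y \<le> real K / 2"
    proof -
      have "(fact y :: real) \<le> real (y ^ y)" by (rule fact_le_power)
      also have "real (y ^ y) = real y powr real y" using y1 by (simp add: powr_realpow)
      also have "\<dots> = exp (real y * ln (real y))" using y1 by (simp add: powr_def)
      also have "\<dots> \<le> exp (s * ln s)" using xlnx_mono[of "real y" s] y1 yle by simp
      also have "\<dots> \<le> exp (ln (real K) - ln 2)"
        using k0[OF K_k0] unfolding s_def by simp
      also have "\<dots> = real K / 2" using K3 by (simp add: exp_diff)
      finally show ?thesis .
    qed
    have fyK: "fact y \<le> K"
    proof -
      have "real (fact y) \<le> real K" using fy K3 by simp
      then show ?thesis by (simp only: of_nat_le_iff)
    qed
    obtain T where T1: "T \<ge> 1" and tT: "totient T \<le> K" and TK: "T \<le> K * fact y"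
      and Tge: "real T \<ge> real K * hsum y - fact y"
      using T_construct[OF y1 fyK] by blast
    have cond: "9 * real b ^ (totient T + 2) * real T \<le> real n"
    proof -
      have bK: "real b ^ K \<le> exp (L / 3)"
      proof -
        have "real b ^ K = real b powr real K" using b by (simp add: powr_realpow)
        also have "\<dots> = exp (real K * lb)" unfolding lb_def using b by (simp add: powr_def)
        also have "\<dots> \<le> exp (L / 3)" using Kle lb0 by (simp add: field_simps)
        finally show ?thesis .
      qed
      have "real b ^ (totient T + 2) \<le> real b ^ (K + 2)" using tT b by (intro power_increasing) auto
      also have "\<dots> = real b ^ 2 * real b ^ K" by (simp only: power_add mult.commute)
      also have "\<dots> \<le> real b ^ 2 * exp (L / 3)" using bK by (intro mult_left_mono) auto
      finally have 1: "real b ^ (totient T + 2) \<le> real b ^ 2 * exp (L / 3)" .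
      have "real T \<le> real K * real (fact y)" using TK by (metis of_nat_le_iff of_nat_mult)
      also have "\<dots> \<le> real K * real K"
      proof (rule mult_left_mono)
        show "real (fact y) \<le> real K" using fyK by (simp only: of_nat_le_iff)
      qed simp
      also have "\<dots> \<le> L * L" using KL by (intro mult_mono) auto
      finally have 2: "real T \<le> L ^ 2" by (simp add: power2_eq_square)
      have "9 * real b ^ (totient T + 2) * real T \<le> 9 * (real b ^ 2 * exp (L / 3)) * L ^ 2"
        using 1 2 by (intro mult_mono) auto
      also have "\<dots> \<le> exp L"
      proof -
        have "L^2 * exp (L/3) / exp L < 1 / (9 * real b ^ 2)" using L2 L1ge(5) LL1 by simp
        then have "L^2 * exp (L/3) * (9 * real b ^ 2) < exp L" using b by (simp add: field_simps)
        then show ?thesis by (simp add: algebra_simps)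
      qed
      finally show ?thesis using nL by simp
    qed
    have ds: "T \<le> digit_sum b (fact n) \<and> T \<le> digit_sum b (lcm_upto n)"
      by (rule main_bound[OF b T1 cond])
    have h1: "hsum y \<ge> 1" by (rule hsum_ge1[OF y1])
    have T2: "real T \<ge> real K * hsum y / 2"
    proof -
      have "real K * hsum y - fact y \<ge> real K * hsum y - real K / 2" using fy by simp
      moreover have "real K * hsum y / 2 \<ge> real K / 2" using h1 K3 by simp
      ultimately show ?thesis using Tge by linarith
    qed
    have lnL: "ln L \<ge> 4"
    proof -
      have "exp 4 \<le> L" using L1ge(4) LL1 by linarith
      then show ?thesis by (subst ln_ge_iff) (use L1' in auto)
    qed
    have lnlnL: "ln (ln L) \<ge> 2 * ln 2"
    proof -
      have "ln (ln L) \<ge> ln 4" using lnL by (intro ln_mono) auto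
      moreover have "ln (4::real) = 2 * ln 2" using ln_realpow[of 2 2] by simp
      ultimately show ?thesis by simp
    qed
    have lnK: "ln (real K) \<ge> ln L / 2"
    proof -
      have "ln (real K) \<ge> ln (sqrt L)" using KsL L1' by (intro ln_mono) auto
      also have "ln (sqrt L) = ln L / 2" using L1' by (simp add: ln_sqrt)
      finally show ?thesis .
    qed
    have lnlnK: "ln (ln (real K)) \<ge> ln (ln L) / 2"
    proof -
      have "ln (ln (real K)) \<ge> ln (ln L / 2)" using lnK lnL by (intro ln_mono) auto
      also have "ln (ln L / 2) = ln (ln L) - ln 2" using lnL by (simp add: ln_div)
      finally show ?thesis using lnlnL by linarith
    qed
    have hs: "hsum y \<ge> ln (ln L) / 4"
    proof -
      have "hsum y \<ge> ln (real y + 1)" by (rule ln_le_hsum)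
      moreover have "ln (real y + 1) \<ge> ln s" using yge s1 by (intro ln_mono) auto
      moreover have "ln s = ln (ln (real K)) / 2" unfolding s_def using lnK1 by (simp add: ln_sqrt)
      ultimately show ?thesis using lnlnK by linarith
    qed
    have "real K * (ln (ln L) / 4) \<le> real K * hsum y" using hs by (intro mult_left_mono) auto
    then have "real T \<ge> real K * (ln (ln L) / 4) / 2" using T2 by linarith
    moreover have "real K * (ln (ln L) / 4) / 2 \<ge> L / (6 * lb) * (ln (ln L) / 4) / 2"
    proof -
      have "ln (ln L) \<ge> 0" using lnlnL ln2_ge by linarith
      then show ?thesis using K6 by (intro divide_right_mono mult_right_mono) auto
    qed
    moreover have "L / (6 * lb) * (ln (ln L) / 4) / 2 = L * ln (ln L) / (48 * lb)"
      by (simp add: field_simps)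
    ultimately have "L * ln (ln L) / (48 * lb) \<le> real T" by linarith
    then show "ln (real n) * ln (ln (ln (real n))) / (48 * ln (real b)) \<le> real (digit_sum b (fact n)) \<and>
     ln (real n) * ln (ln (ln (real n))) / (48 * ln (real b)) \<le> real (digit_sum b (lcm_upto n))"
      using ds unfolding L_def lb_def by (simp add: le_trans)
  qed
qed


lemma final_step:
  fixes C X M s lb L L1 :: real
  assumes lb: "lb > 0" and s1: "s \<ge> 1" and C: "C = min (1 / (96 * lb)) (1 / (2 * (M + 1)))"
    and M0: "M \<ge> 0"
    and big: "L \<ge> L1 \<Longrightarrow> X / (48 * lb) \<le> s"
    and small: "L < L1 \<Longrightarrow> X \<le> M"
  shows "C * X < s"
proof -
  have Cpos: "C > 0" unfolding C using lb M0 by simp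
  show ?thesis
  proof (cases "X \<le> 0")
    case True
    then have "C * X \<le> 0" using Cpos by (simp add: mult_nonneg_nonpos)
    then show ?thesis using s1 by linarith
  next
    case False
    then have X0: "X > 0" by simp
    show ?thesis
    proof (cases "L \<ge> L1")
      case True
      have "C \<le> 1 / (96 * lb)" unfolding C by simp
      then have "C * X \<le> (1 / (96 * lb)) * X" using X0 by (intro mult_right_mono) auto
      then have "C * X \<le> X / (96 * lb)" by simp
      also have "\<dots> < X / (48 * lb)" using X0 lb by (simp add: field_simps)
      also have "\<dots> \<le> s" using big[OF True] .
      finally show ?thesis .
    next
      case False
      then have XM: "X \<le> M" using small by simp
      have "C * X \<le> (1 / (2 * (M + 1))) * M"
        using XM X0 Cpos unfolding C by (intro mult_mono) auto
      also have "\<dots> < 1" using M0 by (simp add: field_simps)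
      finally show ?thesis using s1 by linarith
    qed
  qed
qed

theorem theorem1:
  fixes b :: nat
  assumes "b \<ge> 2"
  shows "\<exists>C::real. C > 0 \<and>
    (\<forall>n::nat. real n > exp 1 \<longrightarrow>
       real (digit_sum b (fact n)) > C * ln (real n) * ln (ln (ln (real n))) \<and>
       real (digit_sum b (lcm_upto n)) > C * ln (real n) * ln (ln (ln (real n))))"
proof -
  note b = assms
  obtain L1 where L1: "\<And>n::nat. ln (real n) \<ge> L1 \<Longrightarrow>
     ln (real n) * ln (ln (ln (real n))) / (48 * ln (real b)) \<le> real (digit_sum b (fact n)) \<and>
     ln (real n) * ln (ln (ln (real n))) / (48 * ln (real b)) \<le> real (digit_sum b (lcm_upto n))"
    using large_n[OF b] by blast
  define lb where "lb = ln (real b)"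
  have lb0: "lb > 0" unfolding lb_def using b by simp
  define M where "M = max 0 (L1 * ln (ln L1))"
  have M0: "M \<ge> 0" unfolding M_def by simp
  define C where "C = min (1 / (96 * lb)) (1 / (2 * (M + 1)))"
  have Cpos: "C > 0" unfolding C_def using lb0 M0 by simp
  show ?thesis
  proof (intro exI conjI allI impI)
    show "C > 0" by (rule Cpos)
    fix n :: nat
    assume ne: "real n > exp 1"
    define L where "L = ln (real n)"
    define X where "X = L * ln (ln L)"
    have n0: "real n > 0" using ne exp_gt_zero[of 1] by linarith
    have "ln (exp 1) < ln (real n)" using ne n0 by (subst ln_less_cancel_iff) auto
    then have L1': "L > 1" unfolding L_def by simp
    have small: "X \<le> M" if "L < L1" for dummy :: real
    proof (cases "ln (ln L) \<le> 0")
      case True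
      then have "X \<le> 0" unfolding X_def using L1' by (simp add: mult_nonneg_nonpos)
      then show ?thesis using M0 by simp
    next
      case False
      have lnLp: "ln L > 0" using L1' by simp
      have "0 < ln (ln L)" using False by simp
      then have lnL1: "ln L > 1" using ln_gt_zero_iff[OF lnLp] by simp
      have "ln L \<le> ln L1" using that L1' by simp
      then have "ln (ln L) \<le> ln (ln L1)" using lnL1 by simp
      then have "X \<le> L1 * ln (ln L1)" unfolding X_def using that False L1'
        by (intro mult_mono) auto
      then show ?thesis unfolding M_def by simp
    qed
    have smallX: "L < L1 \<Longrightarrow> X \<le> M" using small by blast
    have fpos: "fact n > (0::nat)" by simp
    have s1: "real (digit_sum b (fact n)) \<ge> 1" using ds_pos[OF b fpos] by simp
    have s2: "real (digit_sum b (lcm_upto n)) \<ge> 1" using ds_pos[OF b lcm_upto_pos] by simp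
    have big1: "X / (48 * lb) \<le> real (digit_sum b (fact n))" if "L \<ge> L1"
      using L1[of n] that unfolding X_def L_def lb_def by simp
    have big2: "X / (48 * lb) \<le> real (digit_sum b (lcm_upto n))" if "L \<ge> L1"
      using L1[of n] that unfolding X_def L_def lb_def by simp
    have "C * X < real (digit_sum b (fact n))"
      by (rule final_step[OF lb0 s1 C_def M0 big1 smallX])
    moreover have "C * X < real (digit_sum b (lcm_upto n))"
      by (rule final_step[OF lb0 s2 C_def M0 big2 smallX])
    ultimately show "real (digit_sum b (fact n)) > C * ln (real n) * ln (ln (ln (real n)))"
      "real (digit_sum b (lcm_upto n)) > C * ln (real n) * ln (ln (ln (real n)))"
      unfolding X_def L_def by (simp_all add: mult.assoc)
  qed
qed

end
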